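(* Let $(\alpha_n)_{n\in\mathbb N}$ be a sequence of positive integers with $\log\alpha_n/n\to\infty$. Then there exists a perfectly balanced NCIFS $\Phi$ on a set $X\subset\mathbb R^d$ such that: (a) $\# I^{(n)}\le\alpha_n$ for all $n$; (b) $\overline c_n:=\max_{a\in I^{(n)}}\|D\phi^{(n)}_a\|\to0$ as $n\to\infty$; (c) $\operatorname{HD}(J(\Phi))=0$ and $B(\Phi)=d$.
   Context: Here $X\subset\mathbb R^d$ is a compact set equal to the closure of its interior, with $\partial X$ smooth or $X$ convex (for example a cube). $\|D\phi\|:=\sup_{x\in X}|\phi'(x)|$ for a conformal map $\phi$. An NCIFS $\Phi$ on $X$ is a sequence $\Phi^{(j)}=(\phi^{(j)}_i:X\to X)_{i\in I^{(j)}}$, $j\ge1$, of families indexed by finite or countably infinite sets, satisfying: - (open set condition) images of $\operatorname{int}X$ under distinct maps of the same $\Phi^{(j)}$ are disjoint; - (conformality) there is an open connected $V\supset X$ such that all maps extend to $C^1$ conformal diffeomorphisms of $V$ into $V$; - (bounded distortion) there is $K\ge1$ with $|\phi'(x)|\le K|\phi'(y)|$ for $x,y\in V$ and every composition $\phi^{(k)}_{\omega_k}\circ\cdots\circ\phi^{(l)}_{\omega_l}$; - (uniform contraction) $\|D\phi^{(j)}_i\|\le\eta<1$ for all $i,j$. $\Phi$ is perfectly balanced if all maps are affine similarities and, for each $n$, all maps in $\Phi^{(n)}$ have the same contraction ratio. For $\omega\in I^n=\prod_{j\le n}I^{(j)}$ let $\phi_\omega=\phi^{(1)}_{\omega_1}\circ\cdots\circ\phi^{(n)}_{\omega_n}$.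 Define $J(\Phi)=\bigcap_n\bigcup_{\omega\in I^n}\phi_\omega(X)$, $Z_n(t)=\sum_{\omega\in I^n}\|D\phi_\omega\|^t$, $\underline P(t)=\liminf_n\frac1n\log Z_n(t)$ and $B(\Phi)=\sup\{t\ge0:\underline P(t)>0\}$. $\operatorname{HD}$ is Hausdorff dimension. *)

theory Defs
  imports "HOL-Analysis.Analysis"
begin

definition dnorm :: "('a::euclidean_space \<Rightarrow> 'a) \<Rightarrow> 'a \<Rightarrow> real" where
  "dnorm f x = onorm (frechet_derivative f (at x))"

definition normD :: "'a::euclidean_space set \<Rightarrow> ('a \<Rightarrow> 'a) \<Rightarrow> real" where
  "normD X f = (SUP x\<in>X. dnorm f x)"

definition conformal_C1_on :: "'a::euclidean_space set \<Rightarrow> ('a \<Rightarrow> 'a) \<Rightarrow> bool" where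
  "conformal_C1_on V f \<longleftrightarrow> inj_on f V \<and> f ` V \<subseteq> V \<and>
     (\<exists>f' :: 'a \<Rightarrow> ('a \<Rightarrow>\<^sub>L 'a). continuous_on V f' \<and>
        (\<forall>x\<in>V. (f has_derivative blinfun_apply (f' x)) (at x) \<and>
                 (\<exists>c>0. \<forall>v. norm (blinfun_apply (f' x) v) = c * norm v)))"

text \<open>Levels are indexed by j \<ge> 1 (level 0 is ignored); the index set of level j is
  a set of naturals (hence finite or countably infinite); the maps are phi j i.\<close>

fun cmp :: "(nat \<Rightarrow> nat \<Rightarrow> 'a \<Rightarrow> 'a) \<Rightarrow> (nat \<Rightarrow> nat) \<Rightarrow> nat \<Rightarrow> nat \<Rightarrow> 'a \<Rightarrow> 'a" where
  "cmp \<phi> \<omega> k 0 = id"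
| "cmp \<phi> \<omega> k (Suc m) = \<phi> k (\<omega> k) \<circ> cmp \<phi> \<omega> (Suc k) m"

definition words :: "(nat \<Rightarrow> nat set) \<Rightarrow> nat \<Rightarrow> (nat \<Rightarrow> nat) set" where
  "words I n = Pi\<^sub>E {1..n} I"

text \<open>Standing assumptions on X (we use the convex alternative).\<close>
definition admissible_X :: "'a::euclidean_space set \<Rightarrow> bool" where
  "admissible_X X \<longleftrightarrow> compact X \<and> closure (interior X) = X \<and> interior X \<noteq> {} \<and> convex X"

definition NCIFS :: "'a::euclidean_space set \<Rightarrow> (nat \<Rightarrow> nat set) \<Rightarrow> (nat \<Rightarrow> nat \<Rightarrow> 'a \<Rightarrow> 'a) \<Rightarrow> bool" where
  "NCIFS X I \<phi> \<longleftrightarrow> admissible_X X \<and>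
     (\<forall>j\<ge>1. \<forall>i\<in>I j. \<phi> j i ` X \<subseteq> X) \<and>
     (\<forall>j\<ge>1. \<forall>i\<in>I j. \<forall>i'\<in>I j. i \<noteq> i' \<longrightarrow> \<phi> j i ` interior X \<inter> \<phi> j i' ` interior X = {}) \<and>
     (\<exists>V. open V \<and> connected V \<and> X \<subseteq> V \<and>
        (\<forall>j\<ge>1. \<forall>i\<in>I j. conformal_C1_on V (\<phi> j i)) \<and>
        (\<exists>K\<ge>1. \<forall>k\<ge>1. \<forall>m. \<forall>\<omega>. (\<forall>j\<in>{k..<k+m}. \<omega> j \<in> I j) \<longrightarrow>
            (\<forall>x\<in>V. \<forall>y\<in>V. dnorm (cmp \<phi> \<omega> k m) x \<le> K * dnorm (cmp \<phi> \<omega> k m) y))) \<and>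
     (\<exists>\<eta><1. \<forall>j\<ge>1. \<forall>i\<in>I j. normD X (\<phi> j i) \<le> \<eta>)"

definition affine_similarity :: "real \<Rightarrow> ('a::euclidean_space \<Rightarrow> 'a) \<Rightarrow> bool" where
  "affine_similarity r f \<longleftrightarrow> r > 0 \<and>
     (\<exists>Q b. linear Q \<and> (\<forall>x. norm (Q x) = norm x) \<and> (\<forall>x. f x = r *\<^sub>R Q x + b))"

definition perfectly_balanced :: "(nat \<Rightarrow> nat set) \<Rightarrow> (nat \<Rightarrow> nat \<Rightarrow> 'a::euclidean_space \<Rightarrow> 'a) \<Rightarrow> bool" where
  "perfectly_balanced I \<phi> \<longleftrightarrow> (\<forall>n\<ge>1. \<exists>r. \<forall>i\<in>I n. affine_similarity r (\<phi> n i))"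

definition limit_set :: "'a set \<Rightarrow> (nat \<Rightarrow> nat set) \<Rightarrow> (nat \<Rightarrow> nat \<Rightarrow> 'a \<Rightarrow> 'a) \<Rightarrow> 'a set" where
  "limit_set X I \<phi> = (\<Inter>n. \<Union>\<omega>\<in>words I n. cmp \<phi> \<omega> 1 n ` X)"

text \<open>Z_n(t), possibly infinite (countable sum of nonnegative terms).\<close>
definition Zsum :: "'a::euclidean_space set \<Rightarrow> (nat \<Rightarrow> nat set) \<Rightarrow> (nat \<Rightarrow> nat \<Rightarrow> 'a \<Rightarrow> 'a) \<Rightarrow> nat \<Rightarrow> real \<Rightarrow> ennreal" where
  "Zsum X I \<phi> n t = (\<integral>\<^sup>+ \<omega>. ennreal (normD X (cmp \<phi> \<omega> 1 n) powr t) \<partial>count_space (words I n))"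

definition lnE :: "ennreal \<Rightarrow> ereal" where
  "lnE z = (if z = 0 then -\<infinity> else if z = top then \<infinity> else ereal (ln (enn2real z)))"

definition lower_pressure :: "'a::euclidean_space set \<Rightarrow> (nat \<Rightarrow> nat set) \<Rightarrow> (nat \<Rightarrow> nat \<Rightarrow> 'a \<Rightarrow> 'a) \<Rightarrow> real \<Rightarrow> ereal" where
  "lower_pressure X I \<phi> t = liminf (\<lambda>n. lnE (Zsum X I \<phi> n t) / ereal (real n))"

definition bowen_param :: "'a::euclidean_space set \<Rightarrow> (nat \<Rightarrow> nat set) \<Rightarrow> (nat \<Rightarrow> nat \<Rightarrow> 'a \<Rightarrow> 'a) \<Rightarrow> ereal" where
  "bowen_param X I \<phi> = Sup (ereal ` {t. t \<ge> 0 \<and> lower_pressure X I \<phi> t > 0})"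

definition hweight :: "real \<Rightarrow> 'a::metric_space set \<Rightarrow> ennreal" where
  "hweight s U = (if U = {} then 0 else if s = 0 then 1 else ennreal (diameter U powr s))"

definition hausdorff_content :: "real \<Rightarrow> real \<Rightarrow> 'a::metric_space set \<Rightarrow> ennreal" where
  "hausdorff_content \<delta> s A = (INF U\<in>{U :: nat \<Rightarrow> 'a set. A \<subseteq> (\<Union>i. U i) \<and>
       (\<forall>i. bounded (U i) \<and> diameter (U i) \<le> \<delta>)}. \<Sum>i. hweight s (U i))"

definition hausdorff_measure :: "real \<Rightarrow> 'a::metric_space set \<Rightarrow> ennreal" where
  "hausdorff_measure s A = (SUP \<delta>\<in>{0<..}. hausdorff_content \<delta> s A)"

definition hausdorff_dim :: "'a::metric_space set \<Rightarrow> real" where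
  "hausdorff_dim A = Inf {s. s \<ge> 0 \<and> hausdorff_measure s A = 0}"

end

theory Submission
  imports Defs
begin


definition gridset :: "nat \<Rightarrow> 'a::euclidean_space set" where
  "gridset m = (\<lambda>f. \<Sum>b\<in>Basis. real (f b) *\<^sub>R b) ` (Basis \<rightarrow>\<^sub>E {..<m})"

definition gridv :: "nat \<Rightarrow> nat \<Rightarrow> 'a::euclidean_space" where
  "gridv m = (SOME h. bij_betw h {0..<card (gridset m :: 'a set)} (gridset m))"

lemma gridsum_inner:
  fixes f :: "'a::euclidean_space \<Rightarrow> nat"
  assumes "c \<in> Basis"
  shows "(\<Sum>b\<in>Basis. real (f b) *\<^sub>R b) \<bullet> c = real (f c)"
proof -
  have "(\<Sum>b\<in>Basis. real (f b) *\<^sub>R b) \<bullet> c = (\<Sum>b\<in>Basis. real (f b) * (b \<bullet> c))"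
    by (simp add: inner_sum_left)
  also have "\<dots> = (\<Sum>b\<in>Basis. if b = c then real (f c) else 0)"
    by (rule sum.cong) (auto simp: inner_Basis assms)
  also have "\<dots> = real (f c)" using assms by simp
  finally show ?thesis .
qed

lemma gridset_card: "card (gridset m :: 'a::euclidean_space set) = m ^ DIM('a)"
proof -
  have inj: "inj_on (\<lambda>f. \<Sum>b\<in>Basis. real (f b) *\<^sub>R (b::'a)) (Basis \<rightarrow>\<^sub>E {..<m})"
  proof (rule inj_onI)
    fix f g assume f: "f \<in> Basis \<rightarrow>\<^sub>E {..<m}" and g: "g \<in> Basis \<rightarrow>\<^sub>E {..<m}"
      and eq: "(\<Sum>b\<in>Basis. real (f b) *\<^sub>R (b::'a)) = (\<Sum>b\<in>Basis. real (g b) *\<^sub>R b)"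
    show "f = g"
    proof
      fix c show "f c = g c"
      proof (cases "c \<in> Basis")
        case True
        from arg_cong[OF eq, of "\<lambda>v. v \<bullet> c"] show ?thesis
          using gridsum_inner[OF True, of f] gridsum_inner[OF True, of g] by simp
      next
        case False thus ?thesis using f g by (auto simp: PiE_def extensional_def)
      qed
    qed
  qed
  show ?thesis unfolding gridset_def
    by (simp add: card_image[OF inj] card_PiE)
qed

lemma gridset_finite: "finite (gridset m :: 'a::euclidean_space set)"
  unfolding gridset_def by (auto intro!: finite_PiE)

lemma gridv_bij: "bij_betw (gridv m) {0..<m ^ DIM('a)} (gridset m :: 'a::euclidean_space set)"
proof -
  have "\<exists>h. bij_betw h {0..<card (gridset m :: 'a set)} (gridset m :: 'a set)"
    by (rule ex_bij_betw_nat_finite) (rule gridset_finite)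
  hence "bij_betw (gridv m) {0..<card (gridset m :: 'a set)} (gridset m :: 'a set)"
    unfolding gridv_def by (rule someI_ex)
  thus ?thesis by (simp add: gridset_card)
qed

lemma gridset_coord:
  assumes "v \<in> (gridset m :: 'a::euclidean_space set)" "c \<in> Basis"
  shows "\<exists>z. z < m \<and> v \<bullet> c = real z"
  using assms unfolding gridset_def
  by (auto simp: gridsum_inner PiE_def Pi_def)

lemma gridv_coord:
  assumes "i < m ^ DIM('a)" "c \<in> Basis"
  shows "\<exists>z. z < m \<and> (gridv m i :: 'a::euclidean_space) \<bullet> c = real z"
proof -
  have "gridv m i \<in> (gridset m :: 'a set)"
    using gridv_bij[of m] assms(1) by (auto simp: bij_betw_def)
  thus ?thesis using gridset_coord assms(2) by blast
qed

lemma gridv_inj: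
  assumes "i < m ^ DIM('a)" "i' < m ^ DIM('a)" "i \<noteq> i'"
  shows "(gridv m i :: 'a::euclidean_space) \<noteq> gridv m i'"
  using gridv_bij[of m, where 'a='a] assms by (auto simp: bij_betw_def inj_on_def)



lemma cmp_hom:
  assumes "\<And>j i. \<exists>b. \<phi> j i = (\<lambda>x. c j *\<^sub>R x + b)"
  shows "\<exists>B. cmp \<phi> \<omega> k m = (\<lambda>x. prod c {k..<k+m} *\<^sub>R x + (B::'a::real_vector))"
proof (induction m arbitrary: k)
  case 0 thus ?case by (auto intro!: exI[of _ 0])
next
  case (Suc m)
  obtain B where B: "cmp \<phi> \<omega> (Suc k) m = (\<lambda>x. prod c {Suc k..<Suc k+m} *\<^sub>R x + B)"
    using Suc by blast
  obtain b where b: "\<phi> k (\<omega> k) = (\<lambda>x. c k *\<^sub>R x + b)" using assms by blast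
  have pr: "prod c {k..<k + Suc m} = c k * prod c {Suc k..<Suc k+m}"
    by (subst prod.atLeast_Suc_lessThan) auto
  show ?case
  proof (rule exI[of _ "c k *\<^sub>R B + b"], rule ext)
    fix x
    have "cmp \<phi> \<omega> k (Suc m) x = c k *\<^sub>R (prod c {Suc k..<Suc k+m} *\<^sub>R x + B) + b"
      by (simp only: cmp.simps comp_def B b)
    also have "\<dots> = (c k * prod c {Suc k..<Suc k+m}) *\<^sub>R x + (c k *\<^sub>R B + b)"
      by (simp add: algebra_simps)
    also have "\<dots> = prod c {k..<k+Suc m} *\<^sub>R x + (c k *\<^sub>R B + b)" by (simp only: pr)
    finally show "cmp \<phi> \<omega> k (Suc m) x = prod c {k..<k+Suc m} *\<^sub>R x + (c k *\<^sub>R B + b)" .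
  qed
qed

lemma cmp_snoc: "cmp \<phi> \<omega> k (Suc m) = cmp \<phi> \<omega> k m \<circ> \<phi> (k+m) (\<omega> (k+m))"
proof (induction m arbitrary: k)
  case 0 thus ?case by simp
next
  case (Suc m)
  have "cmp \<phi> \<omega> k (Suc (Suc m)) = \<phi> k (\<omega> k) \<circ> cmp \<phi> \<omega> (Suc k) (Suc m)" by simp
  also have "\<dots> = \<phi> k (\<omega> k) \<circ> (cmp \<phi> \<omega> (Suc k) m \<circ> \<phi> (Suc k+m) (\<omega> (Suc k + m)))"
    by (simp only: Suc.IH)
  also have "\<dots> = cmp \<phi> \<omega> k (Suc m) \<circ> \<phi> (k + Suc m) (\<omega> (k + Suc m))"
    by (simp add: comp_assoc)
  finally show ?case .
qed

lemma cmp_cong: "(\<And>j. k \<le> j \<Longrightarrow> j < k + m \<Longrightarrow> \<omega> j = \<omega>' j) \<Longrightarrow> cmp \<phi> \<omega> k m = cmp \<phi> \<omega>' k m"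
  by (induction m arbitrary: k) auto

lemma dnorm_hom: "dnorm (\<lambda>x::'a::euclidean_space. R *\<^sub>R x + B) y = \<bar>R\<bar>"
proof -
  have "((\<lambda>x::'a. R *\<^sub>R x + B) has_derivative (\<lambda>h. R *\<^sub>R h)) (at y)"
    by (auto intro!: derivative_eq_intros)
  hence "frechet_derivative (\<lambda>x::'a. R *\<^sub>R x + B) (at y) = (\<lambda>h. R *\<^sub>R h)"
    by (metis frechet_derivative_at)
  moreover have "onorm (\<lambda>h::'a. R *\<^sub>R h) = \<bar>R\<bar>"
  proof -
    have "onorm (\<lambda>h::'a. R *\<^sub>R h) = \<bar>R\<bar> * onorm (\<lambda>x::'a. x)"
      by (rule onorm_scaleR[OF bounded_linear_ident])
    moreover have "onorm (\<lambda>x::'a. x) = 1" by (rule onorm_id)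
    ultimately show ?thesis by simp
  qed
  ultimately show ?thesis by (simp add: dnorm_def)
qed

lemma normD_hom: "X \<noteq> {} \<Longrightarrow> normD X (\<lambda>x::'a::euclidean_space. R *\<^sub>R x + B) = \<bar>R\<bar>"
  by (simp add: normD_def dnorm_hom)



fun st :: "(nat \<Rightarrow> nat) \<Rightarrow> nat \<Rightarrow> nat \<times> nat \<times> nat" where
  "st a 0 = (0, 1, 1)"
| "st a (Suc n) = (case st a n of (j,P,Q) \<Rightarrow>
     if (2*P*Q)^((j+1)^2) \<le> a (Suc n) then (j+1, P * a (Suc n), Q * (2*P)^(j+1))
     else (j, P * min (j+1) (a (Suc n)), Q * 2))"

definition "jj a n = fst (st a n)"
definition "PP a n = fst (snd (st a n))"
definition "QQ a n = snd (snd (st a n))"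
definition spec :: "(nat \<Rightarrow> nat) \<Rightarrow> nat \<Rightarrow> bool" where
  "spec a n \<longleftrightarrow> (2*PP a (n-1)*QQ a (n-1))^((jj a (n-1)+1)^2) \<le> a n"
definition "mm a n = (if spec a n then a n else min (jj a (n-1)+1) (a n))"
definition "kk a n = (if spec a n then (2*PP a (n-1))^(jj a (n-1)+1) else 2)"

lemma st0: "jj a 0 = 0" "PP a 0 = 1" "QQ a 0 = 1"
  by (simp_all add: jj_def PP_def QQ_def)

lemma st_Suc:
  "jj a (Suc n) = jj a n + (if spec a (Suc n) then 1 else 0)"
  "PP a (Suc n) = PP a n * mm a (Suc n)"
  "QQ a (Suc n) = QQ a n * kk a (Suc n)"
proof -
  obtain j P Q where e: "st a n = (j,P,Q)" by (cases "st a n") auto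
  have [simp]: "jj a n = j" "PP a n = P" "QQ a n = Q" using e by (simp_all add: jj_def PP_def QQ_def)
  show "jj a (Suc n) = jj a n + (if spec a (Suc n) then 1 else 0)"
    "PP a (Suc n) = PP a n * mm a (Suc n)"
    "QQ a (Suc n) = QQ a n * kk a (Suc n)"
    using e by (simp_all add: jj_def PP_def QQ_def spec_def mm_def kk_def)
qed

context
  fixes a :: "nat \<Rightarrow> nat"
  assumes apos: "\<And>n. n \<ge> 1 \<Longrightarrow> a n \<ge> 1"
begin

lemma PQ_pos: "PP a n \<ge> 1 \<and> QQ a n \<ge> 1"
proof (induction n)
  case 0 thus ?case by (simp add: st0)
next
  case (Suc n)
  have "mm a (Suc n) \<ge> 1" using apos[of "Suc n"] by (auto simp: mm_def)
  moreover have "kk a (Suc n) \<ge> 1" using Suc by (auto simp: kk_def)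
  ultimately show ?case using Suc by (simp add: st_Suc)
qed

lemma PP_pos: "PP a n \<ge> 1" and QQ_pos: "QQ a n \<ge> 1" using PQ_pos by auto

lemma mm_pos: "n \<ge> 1 \<Longrightarrow> mm a n \<ge> 1"
  using apos by (auto simp: mm_def)

lemma mm_le: "mm a n \<le> a n"
  by (auto simp: mm_def)

lemma mm_ge: "min (jj a (n-1)+1) (a n) \<le> mm a n"
  by (auto simp: mm_def)

lemma kk_ge: "n \<ge> 1 \<Longrightarrow> kk a n \<ge> 2"
proof -
  assume "n \<ge> 1"
  have "2 ^ (jj a (n-1)+1) \<le> (2*PP a (n-1))^(jj a (n-1)+1)"
    using PP_pos[of "n-1"] by (intro power_mono) auto
  moreover have "(2::nat) \<le> 2 ^ (jj a (n-1)+1)"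
    by simp
  ultimately show ?thesis by (auto simp: kk_def)
qed

lemma PP_prod: "PP a n = prod (mm a) {1..n}"
  by (induction n) (simp_all add: st0 st_Suc prod.nat_ivl_Suc')

lemma QQ_prod: "QQ a n = prod (kk a) {1..n}"
  by (induction n) (simp_all add: st0 st_Suc prod.nat_ivl_Suc')

lemma jj_mono: "m \<le> n \<Longrightarrow> jj a m \<le> jj a n"
proof (induction n)
  case 0 thus ?case by simp
next
  case (Suc n) thus ?case by (cases "m = Suc n") (auto simp: st_Suc le_Suc_eq)
qed

lemma invariant: "QQ a n ^ jj a n \<le> 2^(n * jj a n) * PP a n"
proof (induction n)
  case 0 thus ?case by (simp add: st0)
next
  case (Suc n)
  define j P Q where "j = jj a n" "P = PP a n" "Q = QQ a n"
  have P1: "P \<ge> 1" and Q1: "Q \<ge> 1" using PQ_pos j_P_Q_def by auto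
  show ?case
  proof (cases "spec a (Suc n)")
    case True
    have sp: "(2*P*Q)^((j+1)^2) \<le> a (Suc n)" using True by (simp add: spec_def j_P_Q_def)
    have "QQ a (Suc n) ^ jj a (Suc n) = (Q * (2*P)^(j+1))^(j+1)"
      using True by (simp add: st_Suc kk_def j_P_Q_def)
    also have "\<dots> = Q^(j+1) * (2*P)^((j+1)^2)"
      by (metis power_mult power_mult_distrib power2_eq_square)
    also have "\<dots> \<le> Q^((j+1)^2) * (2*P)^((j+1)^2)"
      using Q1 by (intro mult_right_mono power_increasing) (auto simp: power2_eq_square)
    also have "\<dots> = (2*P*Q)^((j+1)^2)" by (metis mult.commute power_mult_distrib)
    also have "\<dots> \<le> a (Suc n)" by (rule sp)
    also have "\<dots> \<le> P * a (Suc n)" using P1 by simp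
    also have "\<dots> = PP a (Suc n)" using True by (simp add: st_Suc mm_def j_P_Q_def)
    also have "\<dots> \<le> 2^(Suc n * jj a (Suc n)) * PP a (Suc n)" by simp
    finally show ?thesis .
  next
    case False
    have "QQ a (Suc n) ^ jj a (Suc n) = (2*Q)^j"
      using False by (simp add: st_Suc kk_def j_P_Q_def mult.commute)
    also have "\<dots> = 2^j * Q^j" by (simp add: power_mult_distrib)
    also have "\<dots> \<le> 2^j * (2^(n*j) * P)" using Suc j_P_Q_def by simp
    also have "\<dots> = 2^(Suc n * j) * P" by (simp add: power_add)
    also have "\<dots> \<le> 2^(Suc n * j) * (P * mm a (Suc n))" using mm_pos[of "Suc n"] by simp
    also have "\<dots> = 2^(Suc n * jj a (Suc n)) * PP a (Suc n)"
      using False by (simp add: st_Suc j_P_Q_def)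
    finally show ?thesis .
  qed
qed


lemma PP_mono: "m \<le> n \<Longrightarrow> PP a m \<le> PP a n"
proof (induction n)
  case 0 thus ?case by simp
next
  case (Suc n)
  have "PP a n \<le> PP a (Suc n)" using mm_pos[of "Suc n"] by (simp add: st_Suc)
  thus ?case using Suc by (cases "m = Suc n") (auto simp: le_Suc_eq)
qed

context
  assumes agrow: "\<And>c. eventually (\<lambda>n. c * real n \<le> ln (real (a n))) sequentially"
begin

lemma jj_unbounded: "\<exists>n. J \<le> jj a n"
proof (rule ccontr)
  assume "\<not> ?thesis"
  hence lt: "\<And>n. jj a n < J" using not_le by blast
  have fin: "finite (range (jj a))" using lt by (auto intro: finite_subset[of _ "{..<J}"])
  define J0 where "J0 = Max (range (jj a))"
  have "J0 \<in> range (jj a)" unfolding J0_def using fin by (intro Max_in) auto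
  then obtain N where N: "jj a N = J0" by auto
  have const: "jj a n = J0" if "n \<ge> N" for n
  proof -
    have "jj a n \<le> J0" unfolding J0_def by (rule Max_ge[OF fin]) simp
    thus ?thesis using jj_mono[OF that] N by simp
  qed
  have nsp: "\<not> spec a (Suc n)" if "n \<ge> N" for n
    using const[of n] const[of "Suc n"] that st_Suc(1)[of a n] by auto
  define C where "C = 2 * PP a N * QQ a N"
  define G where "G = 2 * (J0 + 1)"
  define E where "E = (J0+1)^2"
  have bound: "2 * PP a n * QQ a n \<le> C * G^(n-N)" if "n \<ge> N" for n
    using that
  proof (induction n rule: nat_induct_at_least)
    case base thus ?case by (simp add: C_def)
  next
    case (Suc n)
    have mmb: "mm a (Suc n) \<le> J0 + 1"
      using nsp[OF Suc(1)] const[OF Suc(1)] by (simp add: mm_def)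
    have "2 * PP a (Suc n) * QQ a (Suc n) = (2 * PP a n * QQ a n) * (2 * mm a (Suc n))"
      using nsp[OF Suc(1)] by (simp add: st_Suc kk_def)
    also have "\<dots> \<le> (C * G^(n-N)) * G"
      by (rule mult_mono) (use Suc(2) mmb in \<open>auto simp: G_def\<close>)
    also have "\<dots> = C * G^(Suc n - N)" using Suc(1)
      by (simp add: Suc_diff_le)
    finally show ?case .
  qed
  have C1: "C \<ge> 1" using PP_pos[of N] QQ_pos[of N] by (simp add: C_def)
  have G1: "G \<ge> 1" by (simp add: G_def)
  have key: "ln (real (a (Suc n))) < real E * (ln (real C) + real n * ln (real G))" if "n \<ge> N" for n
  proof -
    have "a (Suc n) < (2 * PP a n * QQ a n)^E"
      using nsp[OF that] const[OF that] by (simp add: spec_def E_def)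
    also have "\<dots> \<le> (C * G^(n-N))^E" using bound[OF that] by (intro power_mono) auto
    also have "\<dots> \<le> (C * G^n)^E" using G1 by (intro power_mono mult_left_mono power_increasing) auto
    finally have lt0: "a (Suc n) < (C * G^n)^E" .
    have "real (a (Suc n)) < real ((C * G^n)^E)" using lt0 by (simp only: of_nat_less_iff)
    also have "\<dots> = real C ^ E * real G ^ (n * E)" by (simp add: power_mult_distrib power_mult)
    finally have lt: "real (a (Suc n)) < real C ^ E * real G ^ (n * E)" .
    have a1: "real (a (Suc n)) > 0" using apos[of "Suc n"] by simp
    have "ln (real (a (Suc n))) < ln (real C ^ E * real G ^ (n * E))"
      using lt a1 by (intro ln_less_cancel_iff[THEN iffD2]) auto
    also have "\<dots> = real E * (ln (real C) + real n * ln (real G))"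
      using C1 G1 by (simp add: ln_mult ln_realpow algebra_simps)
    finally show ?thesis .
  qed
  define c where "c = real E * (ln (real C) + ln (real G)) + 1"
  obtain M where M: "\<And>n. n \<ge> M \<Longrightarrow> c * real n \<le> ln (real (a n))"
    using agrow[of c] by (auto simp: eventually_sequentially)
  define n where "n = max N M"
  have lnC: "ln (real C) \<ge> 0" and lnG: "ln (real G) \<ge> 0" using C1 G1 by auto
  have "c * real (Suc n) \<le> ln (real (a (Suc n)))" using M[of "Suc n"] by (simp add: n_def)
  moreover have "real E * (ln (real C) + real n * ln (real G)) \<le> c * real (Suc n)"
  proof -
    have "real E * (ln (real C) + real n * ln (real G)) \<le> real E * (ln (real C) + ln (real G)) * real (Suc n)"
      using lnC lnG by (simp add: algebra_simps mult_left_mono)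
    also have "\<dots> \<le> c * real (Suc n)" by (simp add: c_def)
    finally show ?thesis .
  qed
  ultimately show False using key[of n] by (simp add: n_def)
qed


lemma mm_big: "eventually (\<lambda>n. M \<le> mm a n) sequentially"
proof (cases "M = 0")
  case True thus ?thesis by simp
next
  case False
  obtain N1 where N1: "M \<le> jj a N1" using jj_unbounded by blast
  obtain N2 where N2: "\<And>n. n \<ge> N2 \<Longrightarrow> ln (real M) * real n \<le> ln (real (a n))"
    using agrow[of "ln (real M)"] by (auto simp: eventually_sequentially)
  show ?thesis unfolding eventually_sequentially
  proof (intro exI[of _ "max (Suc N1) N2"] allI impI)
    fix n assume n: "max (Suc N1) N2 \<le> n"
    have lnM: "ln (real M) \<ge> 0" using False by simp
    have "ln (real M) \<le> ln (real M) * real n" using lnM n by (simp add: mult_le_cancel_left1)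
    also have "\<dots> \<le> ln (real (a n))" using N2 n by simp
    finally have "real M \<le> real (a n)"
      using False apos[of n] n by (subst (asm) ln_le_cancel_iff) auto
    hence "M \<le> a n" by simp
    moreover have "M \<le> jj a (n-1) + 1"
    proof -
      have "N1 \<le> n - 1" using n by arith
      thus ?thesis using jj_mono[of N1 "n-1"] N1 by simp
    qed
    ultimately show "M \<le> mm a n" using mm_ge[of n] by simp
  qed
qed

lemma lnPP: "eventually (\<lambda>n. c * real n \<le> ln (real (PP a n))) sequentially"
proof (cases "c \<le> 0")
  case True
  have "c * real n \<le> ln (real (PP a n))" for n
  proof -
    have "c * real n \<le> 0" using True by (simp add: mult_nonpos_nonneg)
    also have "0 \<le> ln (real (PP a n))" using PP_pos[of n] by simp
    finally show ?thesis .
  qed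
  thus ?thesis by simp
next
  case False
  define M where "M = nat \<lceil>exp (2*c)\<rceil>"
  have M: "exp (2*c) \<le> real M" unfolding M_def by linarith
  have "real M > 0" using M exp_gt_zero[of "2*c"] by linarith
  hence M1: "M \<ge> 1" by simp
  have lnM2: "2*c \<le> ln (real M)" using M M1 ln_ge_iff[of "real M" "2*c"] by simp
  obtain N where N: "\<And>n. n \<ge> N \<Longrightarrow> M \<le> mm a n"
    using mm_big[of M] by (auto simp: eventually_sequentially)
  have pb: "M^(n-N) \<le> PP a n" if "n \<ge> N" for n
    using that
  proof (induction n rule: nat_induct_at_least)
    case base thus ?case using PP_pos[of N] by simp
  next
    case (Suc n)
    have "M^(Suc n - N) = M^(n-N) * M" using Suc(1) by (simp add: Suc_diff_le)
    also have "\<dots> \<le> PP a n * mm a (Suc n)" using Suc N[of "Suc n"] by (intro mult_mono) auto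
    finally show ?case by (simp add: st_Suc)
  qed
  show ?thesis unfolding eventually_sequentially
  proof (intro exI[of _ "2*N"] allI impI)
    fix n assume n: "2*N \<le> n"
    have "c * real n \<le> real (n - N) * (2 * c)" using n False by (simp add: of_nat_diff algebra_simps)
    also have "\<dots> \<le> real (n-N) * ln (real M)"
      using lnM2 by (intro mult_left_mono) auto
    also have "\<dots> = ln (real (M^(n-N)))" using M1 by (simp add: ln_realpow)
    also have "\<dots> \<le> ln (real (PP a n))" using pb[of n] n M1 PP_pos[of n] by (subst ln_le_cancel_iff) auto
    finally show "c * real n \<le> ln (real (PP a n))" .
  qed
qed

lemma spec_large:
  assumes "J \<ge> 1"
  shows "\<exists>n\<ge>1. spec a n \<and> J \<le> jj a n \<and> jj a n = jj a (n-1) + 1"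
proof -
  have ex: "\<exists>n. J \<le> jj a n" by (rule jj_unbounded)
  define n where "n = (LEAST n. J \<le> jj a n)"
  have n1: "J \<le> jj a n" unfolding n_def using ex by (rule LeastI_ex)
  have n0: "n \<noteq> 0"
  proof
    assume "n = 0"
    hence "jj a n = 0" by (simp add: st0)
    with n1 assms show False by simp
  qed
  then obtain p where p: "n = Suc p" by (cases n) auto
  have "\<not> J \<le> jj a p" using not_less_Least[of p "\<lambda>n. J \<le> jj a n"] p by (auto simp: n_def)
  hence "spec a n" using n1 st_Suc(1)[of a p] p by (auto split: if_splits)
  thus ?thesis using n1 st_Suc(1)[of a p] p by auto
qed

end
end


definition rr :: "(nat\<Rightarrow>nat) \<Rightarrow> nat \<Rightarrow> real" where "rr a n = 1 / real (mm a n * kk a n)"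
definition phi :: "(nat\<Rightarrow>nat) \<Rightarrow> nat \<Rightarrow> nat \<Rightarrow> 'a::euclidean_space \<Rightarrow> 'a" where
  "phi a n i x = rr a n *\<^sub>R (x + gridv (mm a n) i)"
definition II :: "'a::euclidean_space itself \<Rightarrow> (nat\<Rightarrow>nat) \<Rightarrow> nat \<Rightarrow> nat set" where
  "II T a n = {..<mm a n ^ DIM('a)}"

lemma phi_hom: "\<exists>b. phi a j i = (\<lambda>x::'a::euclidean_space. rr a j *\<^sub>R x + b)"
  by (rule exI[of _ "rr a j *\<^sub>R gridv (mm a j) i"]) (auto simp: phi_def fun_eq_iff algebra_simps)

lemma cmp_phi: "\<exists>B. cmp (phi a) \<omega> k m = (\<lambda>x::'a::euclidean_space. prod (rr a) {k..<k+m} *\<^sub>R x + B)"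
  by (rule cmp_hom) (rule phi_hom)

context
  fixes a :: "nat \<Rightarrow> nat"
  assumes apos: "\<And>n. n \<ge> 1 \<Longrightarrow> a n \<ge> 1"
begin

lemma mmp: "n \<ge> 1 \<Longrightarrow> mm a n \<ge> 1" using mm_pos[of a] apos by blast
lemma kkp: "n \<ge> 1 \<Longrightarrow> kk a n \<ge> 2" using kk_ge[of a] apos by blast
lemma PPp: "PP a n \<ge> 1" using PP_pos[of a] apos by blast
lemma QQp: "QQ a n \<ge> 1" using QQ_pos[of a] apos by blast
lemma PPprod: "PP a n = prod (mm a) {1..n}" using PP_prod[of a] apos by blast
lemma QQprod: "QQ a n = prod (kk a) {1..n}" using QQ_prod[of a] apos by blast

lemma rr_pos: "n \<ge> 1 \<Longrightarrow> 0 < rr a n"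
  using mmp[of n] kkp[of n] by (simp add: rr_def)

lemma rr_le_mm: "n \<ge> 1 \<Longrightarrow> rr a n \<le> 1 / (2 * real (mm a n))"
proof -
  assume n: "n \<ge> 1"
  have m: "real (mm a n) \<ge> 1" using mmp[OF n] by simp
  have k: "real (kk a n) \<ge> 2" using kkp[OF n] by simp
  have "2 * real (mm a n) \<le> real (mm a n) * real (kk a n)" using m k
    by (metis mult.commute mult_left_mono of_nat_0_le_iff)
  thus ?thesis unfolding rr_def using m by (simp add: frac_le)
qed

lemma rr_le: "n \<ge> 1 \<Longrightarrow> rr a n \<le> 1/2"
proof -
  assume n: "n \<ge> 1"
  have m: "real (mm a n) \<ge> 1" using mmp[OF n] by simp
  have "1 / (2 * real (mm a n)) \<le> 1/2" using m by (simp add: frac_le)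
  thus ?thesis using rr_le_mm[OF n] by linarith
qed

lemma prod_rr: "prod (rr a) {1..n} = 1 / (real (PP a n) * real (QQ a n))"
  unfolding rr_def PPprod QQprod
  by (simp add: prod_dividef prod.distrib of_nat_prod)

lemma X_ne: "cbox 0 (One::'a::euclidean_space) \<noteq> {}"
  by (simp add: box_ne_empty inner_sum_left)

lemma normD_cmp:
  "normD (cbox 0 (One::'a::euclidean_space)) (cmp (phi a) \<omega> 1 n) = 1 / (real (PP a n) * real (QQ a n))"
proof -
  obtain B where B: "cmp (phi a) \<omega> 1 n = (\<lambda>x::'a. prod (rr a) {1..<1+n} *\<^sub>R x + B)"
    using cmp_phi by blast
  have e: "{1..<1+n} = {1..n}" by auto
  have "normD (cbox 0 One) (\<lambda>x::'a. prod (rr a) {1..n} *\<^sub>R x + B) = \<bar>prod (rr a) {1..n}\<bar>"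
    by (rule normD_hom[OF X_ne])
  thus ?thesis unfolding B e using prod_rr PPp[of n] QQp[of n] by simp
qed

lemma words_finite: "finite (words (II (TYPE('a::euclidean_space)) a) n)"
  by (simp add: words_def II_def finite_PiE)

lemma words_card: "card (words (II (TYPE('a::euclidean_space)) a) n) = PP a n ^ DIM('a)"
  by (simp add: words_def II_def card_PiE PPprod prod_power_distrib)


lemma phi_in:
  assumes j: "j \<ge> 1" and i: "i < mm a j ^ DIM('a)" and x: "x \<in> cbox 0 (One::'a::euclidean_space)"
  shows "phi a j i x \<in> cbox 0 (One::'a)"
  unfolding mem_box
proof (intro ballI conjI)
  fix b :: 'a assume b: "b \<in> Basis"
  obtain z where z: "z < mm a j" "gridv (mm a j) i \<bullet> b = real z" using gridv_coord[OF i b] by blast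
  have xb: "0 \<le> x \<bullet> b" "x \<bullet> b \<le> 1" using x b by (auto simp: mem_box)
  have e: "phi a j i x \<bullet> b = rr a j * (x \<bullet> b + real z)"
    by (simp add: phi_def inner_add_left z(2))
  have r: "0 < rr a j" using rr_pos[OF j] .
  show "0 \<bullet> b \<le> phi a j i x \<bullet> b" using e r xb by simp
  have "x \<bullet> b + real z \<le> real (mm a j)" using xb z(1) by linarith
  hence "rr a j * (x \<bullet> b + real z) \<le> rr a j * real (mm a j)" using r by (intro mult_left_mono) auto
  also have "\<dots> \<le> 1 / (2 * real (mm a j)) * real (mm a j)"
    using rr_le_mm[OF j] by (intro mult_right_mono) auto
  also have "\<dots> \<le> 1" using mmp[OF j] by simp
  finally show "phi a j i x \<bullet> b \<le> One \<bullet> b" using e b by simp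
qed

lemma phi_osc:
  assumes j: "j \<ge> 1" and i: "i < mm a j ^ DIM('a)" and i': "i' < mm a j ^ DIM('a)" and ne: "i \<noteq> i'"
  shows "phi a j i ` box 0 (One::'a::euclidean_space) \<inter> phi a j i' ` box 0 One = {}"
proof (rule ccontr)
  assume "\<not> ?thesis"
  then obtain x y where x: "x \<in> box 0 (One::'a)" and y: "y \<in> box 0 (One::'a)"
    and eq: "phi a j i x = phi a j i' y" by auto
  have r: "0 < rr a j" using rr_pos[OF j] .
  have eq2: "x + gridv (mm a j) i = y + gridv (mm a j) i'" using eq r by (simp add: phi_def)
  have "(gridv (mm a j) i :: 'a) \<noteq> gridv (mm a j) i'" using gridv_inj[OF i i' ne] .
  then obtain b :: 'a where b: "b \<in> Basis" "gridv (mm a j) i \<bullet> b \<noteq> gridv (mm a j) i' \<bullet> b"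
    using euclidean_eqI by blast
  obtain z where z: "gridv (mm a j) i \<bullet> b = real z" using gridv_coord[OF i b(1)] by blast
  obtain z' where z': "gridv (mm a j) i' \<bullet> b = real z'" using gridv_coord[OF i' b(1)] by blast
  have "x \<bullet> b + real z = y \<bullet> b + real z'" using arg_cong[OF eq2, of "\<lambda>v. v \<bullet> b"] z z'
    by (simp add: inner_add_left)
  moreover have "0 < x \<bullet> b" "x \<bullet> b < 1" "0 < y \<bullet> b" "y \<bullet> b < 1" using x y b(1) by (auto simp: mem_box)
  moreover have "z \<noteq> z'" using b(2) z z' by auto
  hence "z + 1 \<le> z' \<or> z' + 1 \<le> z" by arith
  hence "real z + 1 \<le> real z' \<or> real z' + 1 \<le> real z"
    by (metis of_nat_1 of_nat_add of_nat_le_iff)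
  ultimately show False by linarith
qed

lemma normD_phi: "normD (cbox 0 (One::'a::euclidean_space)) (phi a j i) = \<bar>rr a j\<bar>"
proof -
  obtain b where b: "phi a j i = (\<lambda>x::'a. rr a j *\<^sub>R x + b)" using phi_hom by blast
  show ?thesis unfolding b by (rule normD_hom[OF X_ne])
qed

lemma dnorm_cmp: "dnorm (cmp (phi a) \<omega> k m) (x::'a::euclidean_space) = \<bar>prod (rr a) {k..<k+m}\<bar>"
proof -
  obtain B where B: "cmp (phi a) \<omega> k m = (\<lambda>x::'a. prod (rr a) {k..<k+m} *\<^sub>R x + B)"
    using cmp_phi by blast
  show ?thesis unfolding B by (rule dnorm_hom)
qed

lemma conformal_phi: "j \<ge> 1 \<Longrightarrow> conformal_C1_on UNIV (phi a j i :: 'a::euclidean_space \<Rightarrow> 'a)"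
proof -
  assume j: "j \<ge> 1"
  have r: "0 < rr a j" using rr_pos[OF j] .
  obtain b where b: "phi a j i = (\<lambda>x::'a. rr a j *\<^sub>R x + b)" using phi_hom by blast
  show ?thesis unfolding conformal_C1_on_def b
  proof (intro conjI exI[of _ "\<lambda>_. rr a j *\<^sub>R id_blinfun"])
    show "inj_on (\<lambda>x::'a. rr a j *\<^sub>R x + b) UNIV" using r by (auto simp: inj_on_def)
    show "(\<lambda>x::'a. rr a j *\<^sub>R x + b) ` UNIV \<subseteq> UNIV" by simp
    show "continuous_on UNIV (\<lambda>_::'a. rr a j *\<^sub>R (id_blinfun::'a \<Rightarrow>\<^sub>L 'a))" by simp
    show "\<forall>x\<in>UNIV. ((\<lambda>x::'a. rr a j *\<^sub>R x + b) has_derivative blinfun_apply (rr a j *\<^sub>R id_blinfun)) (at x) \<and>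
        (\<exists>c>0. \<forall>v. norm (blinfun_apply (rr a j *\<^sub>R (id_blinfun::'a \<Rightarrow>\<^sub>L 'a)) v) = c * norm v)"
      using r by (auto simp: scaleR_blinfun.rep_eq intro!: derivative_eq_intros exI[of _ "rr a j"])
  qed
qed

lemma ncifs: "NCIFS (cbox 0 (One::'a::euclidean_space)) (II TYPE('a) a) (phi a)"
  unfolding NCIFS_def
proof (intro conjI)
  have bne: "box 0 (One::'a) \<noteq> {}" by (simp add: box_ne_empty inner_sum_left)
  show "admissible_X (cbox 0 (One::'a))"
    unfolding admissible_X_def using bne by (simp add: closure_box)
  show "\<forall>j\<ge>1. \<forall>i\<in>II TYPE('a) a j. phi a j i ` cbox 0 One \<subseteq> cbox 0 (One::'a)"
    using phi_in by (auto simp: II_def)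
  show "\<forall>j\<ge>1. \<forall>i\<in>II TYPE('a) a j. \<forall>i'\<in>II TYPE('a) a j. i \<noteq> i' \<longrightarrow>
      phi a j i ` interior (cbox 0 One) \<inter> phi a j i' ` interior (cbox 0 (One::'a)) = {}"
  proof (intro allI impI ballI)
    fix j i i' :: nat assume j: "j \<ge> 1" and i: "i \<in> II TYPE('a) a j" and i': "i' \<in> II TYPE('a) a j"
      and ne: "i \<noteq> i'"
    show "phi a j i ` interior (cbox 0 One) \<inter> phi a j i' ` interior (cbox 0 (One::'a)) = {}"
      unfolding interior_cbox by (rule phi_osc[OF j _ _ ne]) (use i i' in \<open>auto simp: II_def\<close>)
  qed
  show "\<exists>V. open V \<and> connected V \<and> cbox 0 One \<subseteq> V \<and>
       (\<forall>j\<ge>1. \<forall>i\<in>II TYPE('a) a j. conformal_C1_on V (phi a j i :: 'a \<Rightarrow> 'a)) \<and>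
       (\<exists>K\<ge>1. \<forall>k\<ge>1. \<forall>m \<omega>. (\<forall>j\<in>{k..<k + m}. \<omega> j \<in> II TYPE('a) a j) \<longrightarrow>
          (\<forall>x\<in>V. \<forall>y\<in>V. dnorm (cmp (phi a) \<omega> k m) x \<le> K * dnorm (cmp (phi a) \<omega> k m) (y::'a)))"
    by (rule exI[of _ UNIV]) (auto simp: conformal_phi dnorm_cmp intro!: exI[of _ 1])
  show "\<exists>\<eta><1. \<forall>j\<ge>1. \<forall>i\<in>II TYPE('a) a j. normD (cbox 0 (One::'a)) (phi a j i) \<le> \<eta>"
  proof (intro exI[of _ "1/2"] conjI allI impI ballI)
    fix j i :: nat assume j: "j \<ge> 1"
    show "normD (cbox 0 (One::'a)) (phi a j i) \<le> 1/2"
      using rr_le[OF j] rr_pos[OF j] by (simp add: normD_phi)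
  qed simp
qed

lemma pbal: "perfectly_balanced (II TYPE('a::euclidean_space) a) (phi a :: nat \<Rightarrow> nat \<Rightarrow> 'a \<Rightarrow> 'a)"
  unfolding perfectly_balanced_def affine_similarity_def
proof (intro allI impI)
  fix n :: nat assume n: "n \<ge> 1"
  show "\<exists>r. \<forall>i\<in>II TYPE('a) a n. 0 < r \<and> (\<exists>Q b. linear Q \<and> (\<forall>x. norm (Q x) = norm x) \<and> (\<forall>x. (phi a n i :: 'a \<Rightarrow> 'a) x = r *\<^sub>R Q x + b))"
  proof (intro exI[of _ "rr a n"] ballI conjI)
  fix i :: nat
  show "0 < rr a n" using rr_pos[OF n] .
  obtain b where b: "phi a n i = (\<lambda>x::'a. rr a n *\<^sub>R x + b)" using phi_hom by blast
  show "\<exists>Q b. linear Q \<and> (\<forall>x. norm (Q x) = norm x) \<and> (\<forall>x. (phi a n i :: 'a \<Rightarrow> 'a) x = rr a n *\<^sub>R Q x + b)"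
  proof -
    have lin: "linear (\<lambda>x::'a. x)" by (rule linear_id[unfolded id_def])
    have "linear (\<lambda>x::'a. x) \<and> (\<forall>x::'a. norm x = norm x) \<and> (\<forall>x. phi a n i x = rr a n *\<^sub>R x + b)"
      using lin b by simp
    thus ?thesis by blast
  qed
  qed
qed

end


definition ZZ :: "(nat\<Rightarrow>nat) \<Rightarrow> nat \<Rightarrow> nat \<Rightarrow> real \<Rightarrow> real" where
  "ZZ a D n t = real (PP a n) ^ D * (1 / (real (PP a n) * real (QQ a n))) powr t"

context
  fixes a :: "nat \<Rightarrow> nat"
  assumes apos: "\<And>n. n \<ge> 1 \<Longrightarrow> a n \<ge> 1"
begin

lemma mmp6: "n \<ge> 1 \<Longrightarrow> mm a n \<ge> 1" using mm_pos[of a] apos by blast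
lemma kkp6: "n \<ge> 1 \<Longrightarrow> kk a n \<ge> 2" using kk_ge[of a] apos by blast
lemma PPp6: "PP a n \<ge> 1" using PP_pos[of a] apos by blast
lemma QQp6: "QQ a n \<ge> 1" using QQ_pos[of a] apos by blast
lemmas words_finite' = words_finite[of a, OF apos]
lemmas words_card' = words_card[of a, OF apos]
lemmas normD_cmp' = normD_cmp[of a, OF apos]
lemma rr_pos': "n \<ge> 1 \<Longrightarrow> 0 < rr a n" using rr_pos[of a] apos by blast
lemma rr_le_mm': "n \<ge> 1 \<Longrightarrow> rr a n \<le> 1 / (2 * real (mm a n))" using rr_le_mm[of a] apos by blast
lemma normD_phi': "normD (cbox 0 (One::'a::euclidean_space)) (phi a j i) = \<bar>rr a j\<bar>" using normD_phi[of a] apos by blast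

lemma ZZ_pos: "ZZ a D n t > 0"
  using PPp6[of n] QQp6[of n] by (simp add: ZZ_def)

lemma ln_ZZ: "ln (ZZ a D n t) = (real D - t) * ln (real (PP a n)) - t * ln (real (QQ a n))"
proof -
  have P: "real (PP a n) > 0" and Q: "real (QQ a n) > 0" using PPp6[of n] QQp6[of n] by auto
  have "ln (ZZ a D n t) = ln (real (PP a n) ^ D) + ln ((1 / (real (PP a n) * real (QQ a n))) powr t)"
    unfolding ZZ_def using P Q by (simp add: ln_mult)
  also have "\<dots> = real D * ln (real (PP a n)) + t * ln (1 / (real (PP a n) * real (QQ a n)))"
    using P Q by (simp add: ln_realpow ln_powr)
  also have "\<dots> = (real D - t) * ln (real (PP a n)) - t * ln (real (QQ a n))"
    using P Q by (simp add: ln_div ln_mult algebra_simps)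
  finally show ?thesis .
qed

lemma Zsum_eq: "Zsum (cbox 0 (One::'a::euclidean_space)) (II TYPE('a) a) (phi a) n t = ennreal (ZZ a DIM('a) n t)"
proof -
  have "Zsum (cbox 0 (One::'a)) (II TYPE('a) a) (phi a) n t =
      (\<Sum>\<omega>\<in>words (II TYPE('a) a) n. ennreal (normD (cbox 0 (One::'a)) (cmp (phi a) \<omega> 1 n) powr t))"
    unfolding Zsum_def by (rule nn_integral_count_space_finite[OF words_finite'])
  also have "\<dots> = (\<Sum>\<omega>\<in>words (II TYPE('a) a) n. ennreal ((1 / (real (PP a n) * real (QQ a n))) powr t))"
    by (rule sum.cong[OF refl]) (simp only: normD_cmp')
  also have "\<dots> = of_nat (card (words (II TYPE('a) a) n)) * ennreal ((1 / (real (PP a n) * real (QQ a n))) powr t)"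
    by simp
  also have "\<dots> = ennreal (ZZ a DIM('a) n t)"
    unfolding ZZ_def
    by (simp add: words_card' ennreal_mult ennreal_of_nat_eq_real_of_nat)
  finally show ?thesis .
qed

lemma lower_pressure_eq:
  "lower_pressure (cbox 0 (One::'a::euclidean_space)) (II TYPE('a) a) (phi a) t =
     liminf (\<lambda>n. ereal (ln (ZZ a DIM('a) n t)) / ereal (real n))"
proof -
  have "lnE (ennreal (ZZ a DIM('a) n t)) = ereal (ln (ZZ a DIM('a) n t))" for n
    using ZZ_pos[of "DIM('a)" n t] by (simp add: lnE_def)
  thus ?thesis unfolding lower_pressure_def Zsum_eq by simp
qed

lemma liminf_ge:
  assumes "eventually (\<lambda>n. c * real n \<le> f n) sequentially"
  shows "ereal c \<le> liminf (\<lambda>n. ereal (f n) / ereal (real n))"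
proof -
  have "eventually (\<lambda>n. ereal c \<le> ereal (f n) / ereal (real n)) sequentially"
    using assms eventually_ge_at_top[of 1]
  proof eventually_elim
    case (elim n)
    hence "c \<le> f n / real n" by (simp add: field_simps)
    thus ?case using elim by simp
  qed
  hence "liminf (\<lambda>n. ereal c) \<le> liminf (\<lambda>n. ereal (f n) / ereal (real n))"
    by (rule Liminf_mono)
  thus ?thesis by (simp add: Liminf_const)
qed

lemma liminf_le0:
  assumes "\<And>n. f n \<le> 0"
  shows "liminf (\<lambda>n. ereal (f n) / ereal (real n)) \<le> 0"
proof -
  have "eventually (\<lambda>n. ereal (f n) / ereal (real n) \<le> 0) sequentially"
    using eventually_ge_at_top[of 1]
  proof eventually_elim
    case (elim n)
    hence "f n / real n \<le> 0" using assms[of n] by (simp add: divide_nonpos_nonneg)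
    thus ?case using elim by simp
  qed
  hence "liminf (\<lambda>n. ereal (f n) / ereal (real n)) \<le> liminf (\<lambda>n. 0::ereal)"
    by (rule Liminf_mono)
  thus ?thesis by (simp add: Liminf_const)
qed

lemma ZZ_le0: "real D \<le> t \<Longrightarrow> ln (ZZ a D n t) \<le> 0"
proof -
  assume t: "real D \<le> t"
  have "ln (real (PP a n)) \<ge> 0" "ln (real (QQ a n)) \<ge> 0" using PPp6[of n] QQp6[of n] by auto
  moreover have "t \<ge> 0" using t by (meson of_nat_0_le_iff order_trans)
  ultimately show ?thesis unfolding ln_ZZ using t
    by (smt (verit) mult_nonneg_nonneg mult_nonpos_nonneg)
qed

context
  assumes agrow: "\<And>c. eventually (\<lambda>n. c * real n \<le> ln (real (a n))) sequentially"
begin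

lemma ZZ_big:
  assumes t0: "0 \<le> t" and tD: "t < real D"
  shows "eventually (\<lambda>n. 1 * real n \<le> ln (ZZ a D n t)) sequentially"
proof -
  define J0 where "J0 = nat \<lceil>2*t/(real D - t)\<rceil> + 1"
  have J0: "2*t/(real D - t) \<le> real J0" "J0 \<ge> 1" unfolding J0_def by linarith+
  obtain N1 where N1: "J0 \<le> jj a N1" using jj_unbounded[of a J0] apos agrow by blast
  define c where "c = 2 * (t * ln 2 + 1) / (real D - t)"
  obtain N2 where N2: "\<And>n. n \<ge> N2 \<Longrightarrow> c * real n \<le> ln (real (PP a n))"
    using lnPP[of a c] apos agrow by (auto simp: eventually_sequentially)
  show ?thesis unfolding eventually_sequentially
  proof (intro exI[of _ "max N1 N2"] allI impI)
    fix n assume n: "max N1 N2 \<le> n"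
    define LP where "LP = ln (real (PP a n))"
    define LQ where "LQ = ln (real (QQ a n))"
    define j where "j = real (jj a n)"
    have LP0: "LP \<ge> 0" and LQ0: "LQ \<ge> 0" using PPp6[of n] QQp6[of n] by (auto simp: LP_def LQ_def)
    have jJ0: "real J0 \<le> j" using jj_mono[of a N1 n] N1 n apos by (auto simp: j_def)
    have j1: "j \<ge> 1" using jJ0 J0(2) by linarith
    have inv: "QQ a n ^ jj a n \<le> 2^(n * jj a n) * PP a n" using invariant[of a n] apos by blast
    have "real (QQ a n ^ jj a n) \<le> real (2^(n * jj a n) * PP a n)" using inv by (simp only: of_nat_le_iff)
    hence "ln (real (QQ a n) ^ jj a n) \<le> ln (2^(n * jj a n) * real (PP a n))"
      using PPp6[of n] QQp6[of n] by (subst ln_le_cancel_iff) auto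
    hence jLQ: "j * LQ \<le> real n * j * ln 2 + LP"
      using PPp6[of n] by (simp add: ln_realpow ln_mult LP_def LQ_def j_def)
    have "t * LQ \<le> t * (real n * ln 2 + LP / j)"
    proof -
      have "LQ \<le> real n * ln 2 + LP / j" using jLQ j1 by (simp add: field_simps)
      thus ?thesis using t0 by (rule mult_left_mono)
    qed
    moreover have "t * (LP / j) \<le> (real D - t) / 2 * LP"
    proof -
      have "t / j \<le> (real D - t) / 2"
      proof -
        have "2 * t \<le> (real D - t) * real J0" using J0(1) tD by (simp add: field_simps)
        also have "\<dots> \<le> (real D - t) * j" using jJ0 tD by (intro mult_left_mono) auto
        finally show ?thesis using j1 by (simp add: field_simps)
      qed
      hence "t / j * LP \<le> (real D - t) / 2 * LP" using LP0 by (rule mult_right_mono)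
      thus ?thesis by simp
    qed
    moreover have "(real D - t) / 2 * LP \<ge> (t * ln 2 + 1) * real n"
    proof -
      have "c * real n \<le> LP" using N2[of n] n by (simp add: LP_def)
      hence "(real D - t) / 2 * (c * real n) \<le> (real D - t) / 2 * LP" using tD by (intro mult_left_mono) auto
      moreover have "(real D - t) / 2 * (c * real n) = (t * ln 2 + 1) * real n" using tD by (simp add: c_def field_simps)
      ultimately show ?thesis by linarith
    qed
    moreover have "t * (real n * ln 2 + LP / j) = t * (real n * ln 2) + t * (LP / j)"
      by (simp add: distrib_left)
    moreover have "(real D - t) * LP = 2 * ((real D - t) / 2 * LP)" by simp
    moreover have "(t * ln 2 + 1) * real n = t * (real n * ln 2) + real n" by (simp add: algebra_simps)
    ultimately have "real n \<le> (real D - t) * LP - t * LQ" by linarith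
    thus "1 * real n \<le> ln (ZZ a D n t)" by (simp add: ln_ZZ LP_def LQ_def)
  qed
qed

lemma bowen: "bowen_param (cbox 0 (One::'a::euclidean_space)) (II TYPE('a) a) (phi a) = ereal (real DIM('a))"
proof -
  have S: "{t. t \<ge> 0 \<and> lower_pressure (cbox 0 (One::'a)) (II TYPE('a) a) (phi a) t > 0} = {0..<real DIM('a)}"
  proof (intro set_eqI iffI)
    fix t assume "t \<in> {t. t \<ge> 0 \<and> lower_pressure (cbox 0 (One::'a)) (II TYPE('a) a) (phi a) t > 0}"
    hence t0: "t \<ge> 0" and p: "lower_pressure (cbox 0 (One::'a)) (II TYPE('a) a) (phi a) t > 0" by auto
    show "t \<in> {0..<real DIM('a)}"
    proof (rule ccontr)
      assume "t \<notin> {0..<real DIM('a)}"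
      hence "real DIM('a) \<le> t" using t0 by auto
      hence "liminf (\<lambda>n. ereal (ln (ZZ a DIM('a) n t)) / ereal (real n)) \<le> 0"
        by (intro liminf_le0 ZZ_le0)
      thus False using p by (simp add: lower_pressure_eq)
    qed
  next
    fix t assume "t \<in> {0..<real DIM('a)}"
    hence t0: "0 \<le> t" and tD: "t < real DIM('a)" by auto
    have "ereal 1 \<le> liminf (\<lambda>n. ereal (ln (ZZ a DIM('a) n t)) / ereal (real n))"
      by (rule liminf_ge[OF ZZ_big[OF t0 tD]])
    moreover have "(0::ereal) < ereal 1" by simp
    ultimately have "lower_pressure (cbox 0 (One::'a)) (II TYPE('a) a) (phi a) t > 0"
      unfolding lower_pressure_eq by (rule less_le_trans[rotated])
    thus "t \<in> {t. t \<ge> 0 \<and> lower_pressure (cbox 0 (One::'a)) (II TYPE('a) a) (phi a) t > 0}"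
      using t0 by simp
  qed
  have D1: "real DIM('a) > 0" by simp
  show ?thesis unfolding bowen_param_def S
  proof (rule antisym)
    show "Sup (ereal ` {0..<real DIM('a)}) \<le> ereal (real DIM('a))"
      by (rule Sup_least) auto
    show "ereal (real DIM('a)) \<le> Sup (ereal ` {0..<real DIM('a)})"
    proof (rule dense_le)
      fix y assume y: "y < ereal (real DIM('a))"
      show "y \<le> Sup (ereal ` {0..<real DIM('a)})"
      proof (cases y)
        case (real r)
        hence r: "r < real DIM('a)" using y by simp
        define u where "u = max 0 r"
        have "u \<in> {0..<real DIM('a)}" using r D1 by (auto simp: u_def)
        hence "ereal u \<le> Sup (ereal ` {0..<real DIM('a)})" by (intro Sup_upper) auto
        moreover have "y \<le> ereal u" using real by (simp add: u_def)
        ultimately show ?thesis by (rule order_trans[rotated])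
      next
        case PInf thus ?thesis using y by simp
      next
        case MInf thus ?thesis by simp
      qed
    qed
  qed
qed

lemma sup_tendsto:
  "(\<lambda>n. SUP i\<in>II TYPE('a::euclidean_space) a n. normD (cbox 0 (One::'a)) (phi a n i)) \<longlonglongrightarrow> 0"
proof (rule LIMSEQ_I)
  fix r :: real assume r: "0 < r"
  define M where "M = nat \<lceil>1/r\<rceil> + 1"
  have M: "1/r < real M" unfolding M_def by linarith
  obtain N where N: "\<And>n. n \<ge> N \<Longrightarrow> M \<le> mm a n"
    using mm_big[of a M] apos agrow by (auto simp: eventually_sequentially)
  show "\<exists>N. \<forall>n\<ge>N. norm ((SUP i\<in>II TYPE('a) a n. normD (cbox 0 (One::'a)) (phi a n i)) - 0) < r"
  proof (intro exI[of _ "max N 1"] allI impI)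
    fix n assume n: "max N 1 \<le> n"
    have n1: "n \<ge> 1" using n by simp
    have "0 < mm a n ^ DIM('a)" using mmp6[OF n1] by simp
    hence "(0::nat) \<in> II TYPE('a) a n" by (simp add: II_def)
    hence ne: "II TYPE('a) a n \<noteq> {}" by blast
    have eq: "(SUP i\<in>II TYPE('a) a n. normD (cbox 0 (One::'a)) (phi a n i)) = rr a n"
      using ne rr_pos'[OF n1] by (simp add: normD_phi')
    have "rr a n \<le> 1 / (2 * real (mm a n))" using rr_le_mm'[OF n1] .
    also have "\<dots> \<le> 1 / real M"
    proof -
      have M0: "real M > 0" using M r by (smt (verit) divide_pos_pos)
      have "real M \<le> 2 * real (mm a n)" using N[of n] n by simp
      thus ?thesis using M0 by (intro divide_left_mono) auto
    qed
    also have "\<dots> < r"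
    proof -
      have M0: "real M > 0" using M r by (smt (verit) divide_pos_pos)
      show ?thesis using M r M0 by (simp add: field_simps)
    qed
    finally show "norm ((SUP i\<in>II TYPE('a) a n. normD (cbox 0 (One::'a)) (phi a n i)) - 0) < r"
      using eq rr_pos'[OF n1] by simp
  qed
qed

end

end


lemma key_ineq:
  fixes P D s dd :: real and j :: nat
  assumes P: "P \<ge> 1" and D: "D > 0" and s: "s > 0" and js: "real j * s \<ge> D"
    and dd: "dd \<le> D / (2*P)^j" and dd0: "dd \<ge> 0"
  shows "P powr D * dd powr s \<le> D powr s / (2 powr s)^j"
proof -
  have k0: "(2*P)^j > 0" using P by simp
  have "dd powr s \<le> (D / (2*P)^j) powr s" using dd dd0 s by (intro powr_mono2) auto
  also have "\<dots> = D powr s / ((2*P)^j) powr s" using D k0 by (simp add: powr_divide)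
  also have "((2*P)^j) powr s = (2*P) powr (real j * s)"
  proof -
    have e1: "(2*P) powr (real j) = (2*P)^j" using P by (intro powr_realpow) auto
    have "((2*P)^j) powr s = ((2*P) powr real j) powr s" by (simp only: e1)
    also have "\<dots> = (2*P) powr (real j * s)" by (simp only: powr_powr)
    finally show ?thesis .
  qed
  also have "\<dots> = 2 powr (real j * s) * P powr (real j * s)" using P by (simp add: powr_mult)
  finally have A: "dd powr s \<le> D powr s / (2 powr (real j * s) * P powr (real j * s))" .
  have B: "P powr D \<le> P powr (real j * s)" using P js by (intro powr_mono) auto
  have C: "2 powr (real j * s) = (2 powr s)^j"
  proof -
    have e1: "(2 powr s) powr (real j) = (2 powr s)^j" by (intro powr_realpow) auto
    have "2 powr (real j * s) = (2 powr s) powr real j" by (simp add: powr_powr mult.commute)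
    thus ?thesis using e1 by simp
  qed
  have pos: "2 powr (real j * s) > 0" "P powr (real j * s) > 0" "P powr D > 0" using P by auto
  have "P powr D * dd powr s \<le> P powr D * (D powr s / (2 powr (real j * s) * P powr (real j * s)))"
    using A pos by (intro mult_left_mono) auto
  also have "\<dots> = (P powr D / P powr (real j * s)) * (D powr s / 2 powr (real j * s))"
    by (simp add: field_simps)
  also have "\<dots> \<le> 1 * (D powr s / 2 powr (real j * s))"
    using B pos by (intro mult_right_mono) (auto simp: divide_le_eq_1)
  finally show ?thesis using C by simp
qed

context
  fixes a :: "nat \<Rightarrow> nat"
  assumes apos: "\<And>n. n \<ge> 1 \<Longrightarrow> a n \<ge> 1"
  assumes agrow: "\<And>c. eventually (\<lambda>n. c * real n \<le> ln (real (a n))) sequentially"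
begin

lemma PPp7: "PP a n \<ge> 1" using PP_pos[of a] apos by blast
lemma QQp7: "QQ a n \<ge> 1" using QQ_pos[of a] apos by blast
lemma mmp7: "n \<ge> 1 \<Longrightarrow> mm a n \<ge> 1" using mm_pos[of a] apos by blast
lemma kkp7: "n \<ge> 1 \<Longrightarrow> kk a n \<ge> 2" using kk_ge[of a] apos by blast
lemma prod_rr7: "prod (rr a) {1..n} = 1 / (real (PP a n) * real (QQ a n))" using prod_rr[of a] apos by blast
lemma words_finite7: "finite (words (II (TYPE('a::euclidean_space)) a) n)" using words_finite[of a] apos by blast
lemma words_card7: "card (words (II (TYPE('a::euclidean_space)) a) n) = PP a n ^ DIM('a)" using words_card[of a] apos by blast

lemma content_small:
  fixes s \<delta> \<epsilon> :: real
  assumes s: "s > 0" and \<delta>: "\<delta> > 0" and \<epsilon>: "\<epsilon> > 0"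
  shows "hausdorff_content \<delta> s (limit_set (cbox 0 (One::'a::euclidean_space)) (II TYPE('a) a) (phi a)) \<le> ennreal \<epsilon>"
proof -
  define D where "D = real DIM('a)"
  have D0: "D > 0" by (simp add: D_def)
  have gs: "2 powr s > 1" using s by simp
  obtain J1 where J1: "D powr s / \<epsilon> < (2 powr s)^J1" using real_arch_pow[OF gs] by blast
  obtain J2 where J2: "D / \<delta> < (2::real)^J2" using real_arch_pow[of 2] by auto
  define J0 where "J0 = max (max J1 J2) (max 1 (nat \<lceil>D / s\<rceil>))"
  have J0: "J0 \<ge> 1" "J1 \<le> J0" "J2 \<le> J0" "D / s \<le> real J0" unfolding J0_def by (auto, linarith)
  obtain n where n: "n \<ge> 1" "spec a n" "J0 \<le> jj a n" "jj a n = jj a (n-1) + 1"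
    using spec_large[of a J0] apos agrow J0(1) by blast
  define p where "p = n - 1"
  have np: "n = Suc p" using n(1) by (simp add: p_def)
  define j where "j = jj a n"
  define P where "P = PP a p"
  define k where "k = kk a n"
  have kdef: "k = (2 * P)^j" using n(2,4) by (simp add: k_def kk_def P_def j_def p_def)
  have P1: "P \<ge> 1" using PPp7 by (simp add: P_def)
  have k1: "real k \<ge> 1" using kkp7[OF n(1)] by (simp add: k_def)
  define X where "X = cbox 0 (One::'a)"
  define C where "C = cbox 0 ((1 / real k) *\<^sub>R (One::'a))"
  define W where "W = words (II TYPE('a) a) p"
  obtain h where h: "bij_betw h {0..<card W} W"
    using ex_bij_betw_nat_finite[OF words_finite7[of p]] by (auto simp: W_def)
  define R where "R = prod (rr a) {1..<1+p}"
  have R: "R = 1 / (real (PP a p) * real (QQ a p))"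
    unfolding R_def using prod_rr7[of p] by (simp add: atLeastLessThanSuc_atLeastAtMost)
  have R0: "R > 0" using R PPp7[of p] QQp7[of p] by simp
  have cmpf: "\<exists>B. cmp (phi a) \<omega> 1 p = (\<lambda>x::'a. R *\<^sub>R x + B)" for \<omega>
    using cmp_phi[of a \<omega> 1 p] by (simp add: R_def)
  define U where "U i = (if i < card W then cmp (phi a) (h i) 1 p ` C else {})" for i
  define dd where "dd = R * D / real k"
  have cover: "limit_set X (II TYPE('a) a) (phi a) \<subseteq> (\<Union>i. U i)"
  proof
    fix x assume "x \<in> limit_set X (II TYPE('a) a) (phi a)"
    hence "x \<in> (\<Union>\<omega>\<in>words (II TYPE('a) a) n. cmp (phi a) \<omega> 1 n ` X)" by (auto simp: limit_set_def)
    then obtain \<omega> y where \<omega>: "\<omega> \<in> words (II TYPE('a) a) n" and y: "y \<in> X" and x: "x = cmp (phi a) \<omega> 1 n y"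
      by blast
    have e: "cmp (phi a) \<omega> 1 n = cmp (phi a) \<omega> 1 p \<circ> phi a n (\<omega> n)"
    proof -
      have "cmp (phi a) \<omega> 1 (Suc p) = cmp (phi a) \<omega> 1 p \<circ> phi a (1+p) (\<omega> (1+p))" by (rule cmp_snoc)
      thus ?thesis by (simp only: np add.commute[of 1 p] Suc_eq_plus1)
    qed
    have x2: "x = cmp (phi a) \<omega> 1 p (phi a n (\<omega> n) y)" unfolding x e comp_apply by (rule refl)
    have wn: "\<omega> n < mm a n ^ DIM('a)" using \<omega> n(1) by (auto simp: words_def II_def PiE_iff)
    have inC: "phi a n (\<omega> n) y \<in> C"
      unfolding C_def mem_box
    proof (intro ballI conjI)
      fix b :: 'a assume b: "b \<in> Basis"
      obtain z where z: "z < mm a n" "gridv (mm a n) (\<omega> n) \<bullet> b = real z" using gridv_coord[OF wn b] by blast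
      have yb: "0 \<le> y \<bullet> b" "y \<bullet> b \<le> 1" using y b by (auto simp: mem_box X_def)
      have e: "phi a n (\<omega> n) y \<bullet> b = rr a n * (y \<bullet> b + real z)"
        by (simp add: phi_def inner_add_left z(2))
      have r0: "0 < rr a n" using mmp7[OF n(1)] kkp7[OF n(1)] by (simp add: rr_def)
      show "0 \<bullet> b \<le> phi a n (\<omega> n) y \<bullet> b" using e r0 yb by simp
      have "y \<bullet> b + real z \<le> real (mm a n)" using yb z(1) by linarith
      hence "rr a n * (y \<bullet> b + real z) \<le> rr a n * real (mm a n)" using r0 by (intro mult_left_mono) auto
      also have "\<dots> = 1 / real k" using mmp7[OF n(1)] by (simp add: rr_def k_def)
      finally show "phi a n (\<omega> n) y \<bullet> b \<le> ((1 / real k) *\<^sub>R One) \<bullet> b" using e b by simp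
    qed
    define \<omega>' where "\<omega>' = restrict \<omega> {1..p}"
    have \<omega>'W: "\<omega>' \<in> W" using \<omega> by (auto simp: \<omega>'_def W_def words_def PiE_iff np)
    have "cmp (phi a) \<omega>' 1 p = cmp (phi a) \<omega> 1 p" by (rule cmp_cong) (auto simp: \<omega>'_def)
    note eqcmp = this
    have "\<omega>' \<in> h ` {0..<card W}" using h \<omega>'W by (simp add: bij_betw_def)
    then obtain i where i: "i < card W" "h i = \<omega>'" by auto
    have hx: "x = cmp (phi a) (h i) 1 p (phi a n (\<omega> n) y)" unfolding x2 i(2) eqcmp by (rule refl)
    have "x \<in> cmp (phi a) (h i) 1 p ` C" using hx inC by (rule image_eqI)
    hence "x \<in> U i" using i(1) unfolding U_def by simp
    thus "x \<in> (\<Union>i. U i)" by blast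
  qed
  have diamU: "diameter (U i) \<le> dd" and bdU: "bounded (U i)" for i
  proof -
    have dd0: "dd \<ge> 0" using R0 D0 k1 by (simp add: dd_def)
    show "diameter (U i) \<le> dd"
    proof (cases "i < card W")
      case False thus ?thesis using dd0 by (simp add: U_def)
    next
      case True
      obtain B where B: "cmp (phi a) (h i) 1 p = (\<lambda>x::'a. R *\<^sub>R x + B)" using cmpf by blast
      show ?thesis
      proof (rule diameter_le)
        show "U i \<noteq> {} \<or> 0 \<le> dd" using dd0 by simp
        fix x y assume "x \<in> U i" "y \<in> U i"
        have Ui: "U i = (\<lambda>x. R *\<^sub>R x + B) ` C" unfolding U_def B using True by simp
        then obtain u v where u: "u \<in> C" and v: "v \<in> C" and xy: "x = R *\<^sub>R u + B" "y = R *\<^sub>R v + B"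
          using \<open>x \<in> U i\<close> \<open>y \<in> U i\<close> by auto
        have "norm (x - y) = R * norm (u - v)" using R0 by (simp add: xy scaleR_diff_right[symmetric])
        also have "norm (u - v) \<le> (\<Sum>b\<in>Basis. \<bar>(u - v) \<bullet> b\<bar>)" by (rule norm_le_l1)
        also have "\<dots> \<le> (\<Sum>b\<in>(Basis::'a set). 1 / real k)"
        proof (rule sum_mono)
          fix b :: 'a assume b: "b \<in> Basis"
          have "0 \<le> u \<bullet> b" "u \<bullet> b \<le> 1 / real k" "0 \<le> v \<bullet> b" "v \<bullet> b \<le> 1 / real k"
            using u v b by (auto simp: C_def mem_box)
          thus "\<bar>(u - v) \<bullet> b\<bar> \<le> 1 / real k" by (simp add: inner_diff_left)
        qed
        also have "\<dots> = D / real k" by (simp add: D_def)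
        finally show "norm (x - y) \<le> dd" using R0 by (simp add: dd_def mult_left_mono)
      qed
    qed
    show "bounded (U i)"
    proof (cases "i < card W")
      case False thus ?thesis by (simp add: U_def)
    next
      case True
      obtain B where B: "cmp (phi a) (h i) 1 p = (\<lambda>x::'a. R *\<^sub>R x + B)" using cmpf by blast
      have "compact ((\<lambda>x::'a. R *\<^sub>R x + B) ` C)"
        unfolding C_def by (intro compact_continuous_image continuous_intros compact_cbox)
      moreover have Ui: "U i = (\<lambda>x. R *\<^sub>R x + B) ` C" unfolding U_def B using True by simp
      ultimately show ?thesis by (simp add: compact_imp_bounded)
    qed
  qed
  have jJ0: "J0 \<le> j" using n(3) by (simp add: j_def)
  have dd_le: "dd \<le> D / (2 * P)^j"
  proof -
    have "1 \<le> real (PP a p) * real (QQ a p)"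
    proof -
      have a1: "1 \<le> real (PP a p)" and b1: "1 \<le> real (QQ a p)" using PPp7[of p] QQp7[of p] by auto
      show ?thesis using mult_mono[OF a1 b1] by simp
    qed
    hence "R \<le> 1" using R by simp
    hence "dd \<le> D / real k" using D0 k1 R0 by (simp add: dd_def divide_right_mono mult_le_cancel_right1)
    thus ?thesis by (simp add: kdef)
  qed
  have dd0: "dd \<ge> 0" using R0 D0 k1 by (simp add: dd_def)
  have js: "real j * s \<ge> D"
  proof -
    have "D \<le> real J0 * s" using J0(4) s by (simp add: field_simps)
    also have "\<dots> \<le> real j * s" using jJ0 s by (intro mult_right_mono) auto
    finally show ?thesis .
  qed
  have num: "real P powr D * dd powr s \<le> D powr s / (2 powr s)^j"
    by (rule key_ineq) (use P1 D0 s js dd_le dd0 in auto)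
  have "(2 powr s)^J1 \<le> (2 powr s)^j" using gs J0(2) jJ0 by (intro power_increasing) auto
  hence "D powr s / (2 powr s)^j < \<epsilon>"
  proof -
    assume YX: "(2 powr s)^J1 \<le> (2 powr s)^j"
    have X0: "(2 powr s)^j > 0" by simp
    have "D powr s < (2 powr s)^J1 * \<epsilon>" using J1 \<epsilon> by (simp add: pos_divide_less_eq)
    also have "\<dots> \<le> (2 powr s)^j * \<epsilon>" using YX \<epsilon> by (intro mult_right_mono) auto
    finally show ?thesis using X0 by (simp add: pos_divide_less_eq mult.commute)
  qed
  hence small: "real P powr D * dd powr s < \<epsilon>" using num by linarith
  have dd_delta: "dd \<le> \<delta>"
  proof -
    have "(2::real)^J2 \<le> 2^j" using J0(3) jJ0 by (intro power_increasing) auto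
    also have "(2::real)^j \<le> (2 * real P)^j" using P1 by (intro power_mono) auto
    finally have "D / \<delta> < (2 * real P)^j" using J2 by linarith
    hence "D < (2 * real P)^j * \<delta>" using \<delta> by (simp add: pos_divide_less_eq)
    moreover have "(2 * real P)^j > 0" using P1 by simp
    ultimately have "D / (2 * real P)^j < \<delta>" by (simp add: pos_divide_less_eq mult.commute)
    thus ?thesis using dd_le by simp
  qed
  have hw: "hweight s (U i) \<le> ennreal (dd powr s)" for i
  proof (cases "U i = {}")
    case True thus ?thesis by (simp add: hweight_def)
  next
    case False
    have "diameter (U i) powr s \<le> dd powr s"
      using diamU[of i] s by (intro powr_mono2) (auto simp: diameter_ge_0 bdU)
    thus ?thesis using False s by (simp add: hweight_def ennreal_leI)
  qed
  have sumU: "(\<Sum>i. hweight s (U i)) = (\<Sum>i<card W. hweight s (U i))"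
    by (rule suminf_finite) (auto simp: U_def hweight_def)
  have "(\<Sum>i<card W. hweight s (U i)) \<le> (\<Sum>i<card W. ennreal (dd powr s))"
    by (rule sum_mono) (rule hw)
  also have "\<dots> = ennreal (real (card W) * dd powr s)"
    by (simp add: ennreal_mult ennreal_of_nat_eq_real_of_nat)
  also have "real (card W) = real P powr D"
    using P1 by (simp add: W_def words_card7 P_def D_def powr_realpow)
  also have "ennreal (real P powr D * dd powr s) \<le> ennreal \<epsilon>" using small by (intro ennreal_leI) simp
  finally have sumle: "(\<Sum>i. hweight s (U i)) \<le> ennreal \<epsilon>" using sumU by simp
  have "U \<in> {U. limit_set X (II TYPE('a) a) (phi a) \<subseteq> (\<Union>i. U i) \<and> (\<forall>i. bounded (U i) \<and> diameter (U i) \<le> \<delta>)}"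
    using cover bdU diamU dd_delta by (auto intro: order_trans)
  hence "hausdorff_content \<delta> s (limit_set X (II TYPE('a) a) (phi a)) \<le> (\<Sum>i. hweight s (U i))"
    unfolding hausdorff_content_def by (rule INF_lower)
  thus ?thesis using sumle by (simp add: X_def)
qed

end


context
  fixes a :: "nat \<Rightarrow> nat"
  assumes apos: "\<And>n. n \<ge> 1 \<Longrightarrow> a n \<ge> 1"
  assumes agrow: "\<And>c. eventually (\<lambda>n. c * real n \<le> ln (real (a n))) sequentially"
begin

lemma hd0: "hausdorff_dim (limit_set (cbox 0 (One::'a::euclidean_space)) (II TYPE('a) a) (phi a)) = 0"
proof -
  define J where "J = limit_set (cbox 0 (One::'a::euclidean_space)) (II TYPE('a) a) (phi a)"
  have meas0: "hausdorff_measure s J = 0" if s: "s > 0" for s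
  proof -
    have "hausdorff_content \<delta> s J = 0" if d: "\<delta> > 0" for \<delta>
    proof -
      have "hausdorff_content \<delta> s J \<le> 0"
      proof (rule ennreal_le_epsilon)
        fix e :: real assume "0 < e"
        thus "hausdorff_content \<delta> s J \<le> 0 + ennreal e"
          using content_small[OF apos agrow s d, where 'a='a] by (simp add: J_def)
      qed
      thus ?thesis by simp
    qed
    thus ?thesis unfolding hausdorff_measure_def by simp
  qed
  define T where "T = {s::real. s \<ge> 0 \<and> hausdorff_measure s J = 0}"
  have T1: "1 \<in> T" using meas0[of 1] by (simp add: T_def)
  have bdd: "bdd_below T" by (rule bdd_belowI[of _ 0]) (auto simp: T_def)
  have ge: "0 \<le> Inf T"
  proof (rule cInf_greatest)
    show "T \<noteq> {}" using T1 by blast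
    fix x assume "x \<in> T" thus "0 \<le> x" by (simp add: T_def)
  qed
  have le: "Inf T \<le> 0"
  proof (rule ccontr)
    assume "\<not> Inf T \<le> 0"
    hence pos: "Inf T > 0" by simp
    hence "Inf T / 2 \<in> T" using meas0[of "Inf T / 2"] by (simp add: T_def)
    hence "Inf T \<le> Inf T / 2" using bdd by (rule cInf_lower)
    thus False using pos by simp
  qed
  show ?thesis unfolding hausdorff_dim_def J_def[symmetric] T_def[symmetric] using ge le by simp
qed

end


definition aa :: "nat \<Rightarrow> (nat \<Rightarrow> nat) \<Rightarrow> nat \<Rightarrow> nat" where
  "aa D \<alpha> n = nat \<lfloor>real (\<alpha> n) powr (1 / real D)\<rfloor>"

lemma aa_facts:
  assumes D: "D \<ge> 1" and al: "\<alpha> n \<ge> 1"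
  shows "aa D \<alpha> n \<ge> 1" "aa D \<alpha> n ^ D \<le> \<alpha> n"
    "real (\<alpha> n) powr (1 / real D) \<le> 2 * real (aa D \<alpha> n)"
proof -
  define x where "x = real (\<alpha> n) powr (1 / real D)"
  have al1: "real (\<alpha> n) \<ge> 1" using al by simp
  have x1: "x \<ge> 1" unfolding x_def using al1 D by (intro ge_one_powr_ge_zero) auto
  have fl: "real (aa D \<alpha> n) = of_int \<lfloor>x\<rfloor>" unfolding aa_def x_def[symmetric]
    using x1 by simp
  have f1: "\<lfloor>x\<rfloor> \<ge> 1" using x1 by simp
  show "aa D \<alpha> n \<ge> 1" using f1 unfolding aa_def x_def[symmetric] by (simp add: le_nat_iff)
  have "real (aa D \<alpha> n) \<le> x" using fl by simp
  hence "real (aa D \<alpha> n) ^ D \<le> x ^ D" by (intro power_mono) auto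
  also have "x ^ D = real (\<alpha> n)"
  proof -
    have "x ^ D = x powr real D" using x1 by (simp add: powr_realpow)
    also have "\<dots> = real (\<alpha> n)" unfolding x_def using al1 D by (simp add: powr_powr)
    finally show ?thesis .
  qed
  finally show "aa D \<alpha> n ^ D \<le> \<alpha> n" by (simp only: of_nat_power[symmetric] of_nat_le_iff)
  have "x < of_int \<lfloor>x\<rfloor> + 1" by linarith
  thus "real (\<alpha> n) powr (1 / real D) \<le> 2 * real (aa D \<alpha> n)" using fl f1 x_def by linarith
qed

lemma aa_grow:
  assumes D: "D \<ge> 1" and pos: "\<forall>n\<ge>1. \<alpha> n > 0"
    and lim: "filterlim (\<lambda>n. ln (real (\<alpha> n)) / real n) at_top sequentially"
  shows "eventually (\<lambda>n. c * real n \<le> ln (real (aa D \<alpha> n))) sequentially"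
proof -
  have "eventually (\<lambda>n. real D * (\<bar>c\<bar> + 1) \<le> ln (real (\<alpha> n)) / real n) sequentially"
    using lim by (simp add: filterlim_at_top)
  thus ?thesis using eventually_ge_at_top[of 1]
  proof eventually_elim
    case (elim n)
    have al: "\<alpha> n \<ge> 1" using pos elim(2) by auto
    have n1: "real n \<ge> 1" using elim(2) by simp
    have a1: "aa D \<alpha> n \<ge> 1" and a2: "real (\<alpha> n) powr (1 / real D) \<le> 2 * real (aa D \<alpha> n)"
      using aa_facts[where \<alpha>=\<alpha> and n=n, OF D al] by auto
    have D0: "real D > 0" using D by simp
    have "real D * (\<bar>c\<bar> + 1) * real n \<le> ln (real (\<alpha> n))" using elim(1) n1 by (simp add: field_simps)
    hence L: "(\<bar>c\<bar> + 1) * real n \<le> ln (real (\<alpha> n)) / real D" using D0 by (simp add: field_simps)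
    have "ln (real (\<alpha> n)) / real D = ln (real (\<alpha> n) powr (1 / real D))"
      using al by (simp add: ln_powr)
    also have "\<dots> \<le> ln (2 * real (aa D \<alpha> n))"
      using a2 al a1 by (subst ln_le_cancel_iff) auto
    also have "\<dots> = ln 2 + ln (real (aa D \<alpha> n))" using a1 by (simp add: ln_mult)
    finally have "(\<bar>c\<bar> + 1) * real n \<le> ln 2 + ln (real (aa D \<alpha> n))" using L by linarith
    moreover have "ln (2::real) < 1" using ln_2_less_1 .
    moreover have "c * real n \<le> \<bar>c\<bar> * real n" using n1 by (intro mult_right_mono) auto
    moreover have "(\<bar>c\<bar> + 1) * real n = \<bar>c\<bar> * real n + real n" by (simp add: algebra_simps)
    ultimately show ?case using n1 by linarith
  qed
qed

theorem theorem6p2: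
  fixes \<alpha> :: "nat \<Rightarrow> nat"
  assumes "\<forall>n\<ge>1. \<alpha> n > 0"
    and "filterlim (\<lambda>n. ln (real (\<alpha> n)) / real n) at_top sequentially"
  shows "\<exists>(X :: 'a::euclidean_space set) I \<phi>.
           NCIFS X I \<phi> \<and> perfectly_balanced I \<phi> \<and>
           (\<forall>n\<ge>1. finite (I n) \<and> card (I n) \<le> \<alpha> n) \<and>
           ((\<lambda>n. SUP a\<in>I n. normD X (\<phi> n a)) \<longlonglongrightarrow> 0) \<and>
           hausdorff_dim (limit_set X I \<phi>) = 0 \<and>
           bowen_param X I \<phi> = ereal (real DIM('a))"
proof -
  define D where "D = DIM('a)"
  have D1: "D \<ge> 1" by (simp add: D_def DIM_positive Suc_leI)
  define a where "a = aa D \<alpha>"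
  have apos: "a n \<ge> 1" if n: "n \<ge> 1" for n
  proof -
    have al: "\<alpha> n \<ge> 1" using assms(1) n by (auto simp: Suc_le_eq)
    show ?thesis using aa_facts(1)[where \<alpha>=\<alpha> and n=n, OF D1 al] by (simp add: a_def)
  qed
  have agrow: "\<And>c. eventually (\<lambda>n. c * real n \<le> ln (real (a n))) sequentially"
    using aa_grow[OF D1 assms] by (simp add: a_def)
  have card: "\<forall>n\<ge>1. finite (II TYPE('a) a n) \<and> card (II TYPE('a) a n) \<le> \<alpha> n"
  proof (intro allI impI conjI)
    fix n :: nat assume n: "n \<ge> 1"
    show "finite (II TYPE('a) a n)" by (simp add: II_def)
    have al: "\<alpha> n \<ge> 1" using assms(1) n by (auto simp: Suc_le_eq)
    have "card (II TYPE('a) a n) = mm a n ^ D" by (simp add: II_def D_def)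
    also have "\<dots> \<le> a n ^ D"
    proof -
      have "mm a n \<le> a n" using mm_le[of a n] apos by blast
      thus ?thesis by (intro power_mono) auto
    qed
    also have "\<dots> \<le> \<alpha> n" using aa_facts(2)[where \<alpha>=\<alpha> and n=n, OF D1 al] by (simp add: a_def)
    finally show "card (II TYPE('a) a n) \<le> \<alpha> n" .
  qed
  show ?thesis
  proof (intro exI conjI)
    show "NCIFS (cbox 0 (One::'a)) (II TYPE('a) a) (phi a)" using ncifs[of a] apos by blast
    show "perfectly_balanced (II TYPE('a) a) (phi a :: nat \<Rightarrow> nat \<Rightarrow> 'a \<Rightarrow> 'a)" using pbal[of a] apos by blast
    show "\<forall>n\<ge>1. finite (II TYPE('a) a n) \<and> card (II TYPE('a) a n) \<le> \<alpha> n" by (rule card)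
    show "(\<lambda>n. SUP i\<in>II TYPE('a) a n. normD (cbox 0 (One::'a)) (phi a n i)) \<longlonglongrightarrow> 0"
      using sup_tendsto[of a] apos agrow by blast
    show "hausdorff_dim (limit_set (cbox 0 (One::'a)) (II TYPE('a) a) (phi a)) = 0"
      using hd0[of a] apos agrow by blast
    show "bowen_param (cbox 0 (One::'a)) (II TYPE('a) a) (phi a) = ereal (real DIM('a))"
      using bowen[of a] apos agrow by blast
  qed
qed


end
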